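(* Let $\mathcal K=(AP,W,R,L,w_I)$ be a Kripke structure and let $\mathcal U_{\mathcal K}=(AP,W^\bullet,R^\bullet,L^\bullet,\varepsilon)$ be its tree-like unwinding. Then the relation $\{(w^\bullet,\mathrm{pr}(w^\bullet)) : w^\bullet\in W^\bullet\}\subseteq W^\bullet\times W$ is a cycle-bisimulation relation between $\mathcal U_{\mathcal K}$ and $\mathcal K$. Hence $\mathcal K$ and $\mathcal U_{\mathcal K}$ satisfy exactly the same CTL*$_{cd}$ state formulas (i.e., $\mathcal K\models\varphi$ iff $\mathcal U_{\mathcal K}\models\varphi$).
   Context: A Kripke structure over a finite set $AP$ of atomic propositions is a tuple $\mathcal K=(AP,W,R,L,w_I)$ where $W$ is a countable non-empty set of worlds, $w_I\in W$ is the initial world, $R\subseteq W\times W$ is a left-total transition relation (every world has at least one $R$-successor), and $L:W\to 2^{AP}$ is a labelling function. A path is an infinite sequence $\pi=\pi_0\pi_1\cdots$ of worlds with $(\pi_i,\pi_{i+1})\in R$ for all $i\in\mathbb N$; $\mathrm{Pth}(w)$ is the set of paths with $\pi_0=w$. A path $\pi$ is a cycle if for every $i\in\mathbb N$ there is $j>i$ with $\pi_j=\pi_0$ (i.e. $\pi_0$ occurs infinitely often in $\pi$); $\mathrm{Cyc}(w)$ is the set of cycles with $\pi_0=w$. Syntax of CTL*$_{cd}$: state formulas $\varphi::=p\mid\neg\varphi\mid\varphi\wedge\varphi\mid\varphi\vee\varphi\mid \mathsf E\psi\mid\mathsf A\psi\mid\mathsf E^{c}\psi\mid\mathsf A^{c}\psi$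 with $p\in AP$; path formulas $\psi::=\varphi\mid\neg\psi\mid\psi\wedge\psi\mid\psi\vee\psi\mid\mathsf X\psi\mid\psi\,\mathsf U\,\psi$. Semantics: $\mathcal K,w\models p$ iff $p\in L(w)$; Boolean connectives as usual; $\mathcal K,w\models\mathsf E\psi$ iff some $\pi\in\mathrm{Pth}(w)$ has $\mathcal K,\pi,0\models\psi$; $\mathcal K,w\models\mathsf A\psi$ iff every $\pi\in\mathrm{Pth}(w)$ has $\mathcal K,\pi,0\models\psi$; $\mathcal K,w\models\mathsf E^{c}\psi$ iff some $\pi\in\mathrm{Cyc}(w)$ has $\mathcal K,\pi,0\models\psi$; $\mathcal K,w\models\mathsf A^{c}\psi$ iff every $\pi\in\mathrm{Cyc}(w)$ has $\mathcal K,\pi,0\models\psi$. For paths: $\mathcal K,\pi,i\models\varphi$ (state formula) iff $\mathcal K,\pi_i\models\varphi$; Boolean connectives as usual; $\mathcal K,\pi,i\models\mathsf X\psi$ iff $\mathcal K,\pi,i+1\models\psi$; $\mathcal K,\pi,i\models\psi_1\mathsf U\psi_2$ iff there is $k\ge0$ with $\mathcal K,\pi,i+k\models\psi_2$ and $\mathcal K,\pi,i+j\models\psi_1$ for all $0\le j<k$. $\mathcal K\models\varphi$ iff $\mathcal K,w_I\models\varphi$. Cycle-bisimulation: for Kripke structures $\mathcal K_1=(AP,W_1,R_1,L_1,w_{I,1})$, $\mathcal K_2=(AP,W_2,R_2,L_2,w_{I,2})$, a relation $B\subseteq W_1\times W_2$ is a cycle-bisimulation relation if $(w_{I,1},w_{I,2})\in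 B$ and for all $(w_1,w_2)\in B$: (a) $L_1(w_1)=L_2(w_2)$; (b) for every $v_1$ with $(w_1,v_1)\in R_1$ there is $v_2$ with $(w_2,v_2)\in R_2$ and $(v_1,v_2)\in B$; (c) for every $v_2$ with $(w_2,v_2)\in R_2$ there is $v_1$ with $(w_1,v_1)\in R_1$ and $(v_1,v_2)\in B$; (d) for every cycle $\pi_1$ of $\mathcal K_1$ with first world $w_1$ there is a cycle $\pi_2$ of $\mathcal K_2$ with first world $w_2$ such that $((\pi_1)_i,(\pi_2)_i)\in B$ for all $i$; (e) symmetrically, for every cycle $\pi_2$ of $\mathcal K_2$ with first world $w_2$ there is a cycle $\pi_1$ of $\mathcal K_1$ with first world $w_1$ such that $((\pi_1)_i,(\pi_2)_i)\in B$ for all $i$. Tree-like unwinding: let $\mathsf{new},\mathsf{cycle}$ be two fresh constants. The projection map $\mathrm{pr}:(W\times\{\mathsf{new},\mathsf{cycle}\})^*\to W$ is given by $\mathrm{pr}(\varepsilon)=w_I$ and $\mathrm{pr}(w^\bullet)=w$ if the last letter of $w^\bullet\neq\varepsilon$ is $(w,\alpha)$. A sequence $w^\bullet$ admits $u^\bullet$ as its initial cycle state if $w^\bullet=u^\bullet\,(v_1,\mathsf{new})(v_2,\mathsf{cycle})\cdots(v_k,\mathsf{cycle})$ for some $k\ge1$ and worlds $v_1,\dots,v_k\in W$ (i.e., $u^\bullet$ is the parent of the closest ancestor-or-self of $w^\bullet$ whose last letter carries $\mathsf{new}$; every $w^\bullet\neq\varepsilon$ has exactly one, $\varepsilon$ has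 none). Define a relation $R^\bullet$ on $(W\times\{\mathsf{new},\mathsf{cycle}\})^*$: for every $w^\bullet$ and every $v$ with $(\mathrm{pr}(w^\bullet),v)\in R$: $(w^\bullet,w^\bullet(v,\mathsf{new}))\in R^\bullet$ (a forward edge); if $w^\bullet$ has initial cycle state $u^\bullet$ with $\mathrm{pr}(u^\bullet)\neq v$, then $(w^\bullet,w^\bullet(v,\mathsf{cycle}))\in R^\bullet$ (a forward edge); if $w^\bullet$ has initial cycle state $u^\bullet$ with $\mathrm{pr}(u^\bullet)=v$, then $(w^\bullet,u^\bullet)\in R^\bullet$ (a back edge); no other pairs are in $R^\bullet$. The tree-like unwinding $\mathcal U_{\mathcal K}=(AP,W^\bullet,R^\bullet,L^\bullet,\varepsilon)$ has as worlds $W^\bullet$ the sequences reachable from $\varepsilon$ via $R^\bullet$, initial world $\varepsilon$, $R^\bullet$ restricted to $W^\bullet$, and $L^\bullet(w^\bullet)=L(\mathrm{pr}(w^\bullet))$. *)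

theory Defs
  imports Main "HOL-Library.Countable_Set"
begin

record ('ap, 'w) kripke =
  AP :: "'ap set"
  W :: "'w set"
  R :: "('w \<times> 'w) set"
  L :: "'w \<Rightarrow> 'ap set"
  init :: 'w

definition is_kripke :: "('ap, 'w) kripke \<Rightarrow> bool" where
  "is_kripke K \<longleftrightarrow>
     finite (AP K) \<and> countable (W K) \<and> W K \<noteq> {} \<and> init K \<in> W K \<and>
     R K \<subseteq> W K \<times> W K \<and> (\<forall>w \<in> W K. \<exists>v. (w, v) \<in> R K) \<and>
     (\<forall>w \<in> W K. L K w \<subseteq> AP K)"

definition Pth :: "('ap, 'w) kripke \<Rightarrow> 'w \<Rightarrow> (nat \<Rightarrow> 'w) set" where
  "Pth K w = {\<pi>. \<pi> 0 = w \<and> (\<forall>i. (\<pi> i, \<pi> (Suc i)) \<in> R K)}"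

definition is_cycle :: "('ap, 'w) kripke \<Rightarrow> (nat \<Rightarrow> 'w) \<Rightarrow> bool" where
  "is_cycle K \<pi> \<longleftrightarrow> (\<forall>i. (\<pi> i, \<pi> (Suc i)) \<in> R K) \<and> (\<forall>i. \<exists>j>i. \<pi> j = \<pi> 0)"

definition Cyc :: "('ap, 'w) kripke \<Rightarrow> 'w \<Rightarrow> (nat \<Rightarrow> 'w) set" where
  "Cyc K w = {\<pi> \<in> Pth K w. is_cycle K \<pi>}"

datatype 'ap sform =
    Atom 'ap
  | SNot "'ap sform"
  | SAnd "'ap sform" "'ap sform"
  | SOr "'ap sform" "'ap sform"
  | Ex "'ap pform"
  | All "'ap pform"
  | ExC "'ap pform"
  | AllC "'ap pform"
and 'ap pform =
    State "'ap sform"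
  | PNot "'ap pform"
  | PAnd "'ap pform" "'ap pform"
  | POr "'ap pform" "'ap pform"
  | Next "'ap pform"
  | Until "'ap pform" "'ap pform"

primrec sat_s :: "('ap, 'w) kripke \<Rightarrow> 'w \<Rightarrow> 'ap sform \<Rightarrow> bool"
and sat_p :: "('ap, 'w) kripke \<Rightarrow> (nat \<Rightarrow> 'w) \<Rightarrow> nat \<Rightarrow> 'ap pform \<Rightarrow> bool" where
  "sat_s K w (Atom p) = (p \<in> L K w)"
| "sat_s K w (SNot \<phi>) = (\<not> sat_s K w \<phi>)"
| "sat_s K w (SAnd \<phi>1 \<phi>2) = (sat_s K w \<phi>1 \<and> sat_s K w \<phi>2)"
| "sat_s K w (SOr \<phi>1 \<phi>2) = (sat_s K w \<phi>1 \<or> sat_s K w \<phi>2)"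
| "sat_s K w (Ex \<psi>) = (\<exists>\<pi> \<in> Pth K w. sat_p K \<pi> 0 \<psi>)"
| "sat_s K w (All \<psi>) = (\<forall>\<pi> \<in> Pth K w. sat_p K \<pi> 0 \<psi>)"
| "sat_s K w (ExC \<psi>) = (\<exists>\<pi> \<in> Cyc K w. sat_p K \<pi> 0 \<psi>)"
| "sat_s K w (AllC \<psi>) = (\<forall>\<pi> \<in> Cyc K w. sat_p K \<pi> 0 \<psi>)"
| "sat_p K \<pi> i (State \<phi>) = sat_s K (\<pi> i) \<phi>"
| "sat_p K \<pi> i (PNot \<psi>) = (\<not> sat_p K \<pi> i \<psi>)"
| "sat_p K \<pi> i (PAnd \<psi>1 \<psi>2) = (sat_p K \<pi> i \<psi>1 \<and> sat_p K \<pi> i \<psi>2)"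
| "sat_p K \<pi> i (POr \<psi>1 \<psi>2) = (sat_p K \<pi> i \<psi>1 \<or> sat_p K \<pi> i \<psi>2)"
| "sat_p K \<pi> i (Next \<psi>) = sat_p K \<pi> (Suc i) \<psi>"
| "sat_p K \<pi> i (Until \<psi>1 \<psi>2) =
     (\<exists>k. sat_p K \<pi> (i + k) \<psi>2 \<and> (\<forall>j<k. sat_p K \<pi> (i + j) \<psi>1))"

definition models :: "('ap, 'w) kripke \<Rightarrow> 'ap sform \<Rightarrow> bool" where
  "models K \<phi> \<longleftrightarrow> sat_s K (init K) \<phi>"

definition cycle_bisim ::
  "('ap, 'v) kripke \<Rightarrow> ('ap, 'w) kripke \<Rightarrow> ('v \<times> 'w) set \<Rightarrow> bool" where
  "cycle_bisim K1 K2 B \<longleftrightarrow>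
     B \<subseteq> W K1 \<times> W K2 \<and> (init K1, init K2) \<in> B \<and>
     (\<forall>(w1, w2) \<in> B.
        L K1 w1 = L K2 w2 \<and>
        (\<forall>v1. (w1, v1) \<in> R K1 \<longrightarrow> (\<exists>v2. (w2, v2) \<in> R K2 \<and> (v1, v2) \<in> B)) \<and>
        (\<forall>v2. (w2, v2) \<in> R K2 \<longrightarrow> (\<exists>v1. (w1, v1) \<in> R K1 \<and> (v1, v2) \<in> B)) \<and>
        (\<forall>\<pi>1 \<in> Cyc K1 w1. \<exists>\<pi>2 \<in> Cyc K2 w2. \<forall>i. (\<pi>1 i, \<pi>2 i) \<in> B) \<and>
        (\<forall>\<pi>2 \<in> Cyc K2 w2. \<exists>\<pi>1 \<in> Cyc K1 w1. \<forall>i. (\<pi>1 i, \<pi>2 i) \<in> B))"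

datatype tag = New | Cycle

text \<open>Sequences are lists; the last letter of a sequence is the last list element.\<close>
definition pr :: "('ap, 'w) kripke \<Rightarrow> ('w \<times> tag) list \<Rightarrow> 'w" where
  "pr K ws = (if ws = [] then init K else fst (last ws))"

definition init_cycle_state :: "('w \<times> tag) list \<Rightarrow> ('w \<times> tag) list \<Rightarrow> bool" where
  "init_cycle_state ws us \<longleftrightarrow>
     (\<exists>v1 vs. ws = us @ [(v1, New)] @ map (\<lambda>v. (v, Cycle)) vs)"

definition Rbul :: "('ap, 'w) kripke \<Rightarrow> (('w \<times> tag) list \<times> ('w \<times> tag) list) set" where
  "Rbul K = {(ws, ws'). \<exists>v. (pr K ws, v) \<in> R K \<and>
      (ws' = ws @ [(v, New)]
       \<or> (\<exists>us. init_cycle_state ws us \<and> pr K us \<noteq> v \<and> ws' = ws @ [(v, Cycle)])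
       \<or> (\<exists>us. init_cycle_state ws us \<and> pr K us = v \<and> ws' = us))}"

definition Wbul :: "('ap, 'w) kripke \<Rightarrow> ('w \<times> tag) list set" where
  "Wbul K = {ws. ([], ws) \<in> (Rbul K)\<^sup>*}"

definition unwinding :: "('ap, 'w) kripke \<Rightarrow> ('ap, ('w \<times> tag) list) kripke" where
  "unwinding K =
     \<lparr> AP = AP K, W = Wbul K, R = Rbul K \<inter> (Wbul K \<times> Wbul K),
       L = (\<lambda>ws. L K (pr K ws)), init = [] \<rparr>"

end

theory Submission
  imports Defs
begin

lemma pr_snoc[simp]: "pr K (xs @ [(v, t)]) = v"
  by (simp add: pr_def)

lemma Rbul_pr: "(ws, ws') \<in> Rbul K \<Longrightarrow> (pr K ws, pr K ws') \<in> R K"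
  unfolding Rbul_def by (auto simp: pr_def)

lemma Wbul_step: "ws \<in> Wbul K \<Longrightarrow> (ws, ws') \<in> Rbul K \<Longrightarrow> ws' \<in> Wbul K"
  unfolding Wbul_def by (auto intro: rtrancl_into_rtrancl)

lemma Wbul_nil: "[] \<in> Wbul K"
  unfolding Wbul_def by auto

lemma pr_in_W:
  assumes "is_kripke K" "ws \<in> Wbul K" shows "pr K ws \<in> W K"
proof -
  have "([], ws) \<in> (Rbul K)\<^sup>*" using assms(2) by (simp add: Wbul_def)
  then show ?thesis
  proof (induction rule: rtrancl_induct)
    case base then show ?case using assms(1) by (simp add: is_kripke_def pr_def)
  next
    case (step y z)
    have "(pr K y, pr K z) \<in> R K" using step(2) by (rule Rbul_pr)
    then show ?case using assms(1) by (auto simp: is_kripke_def)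
  qed
qed

lemma lift:
  assumes "(x0, y0) \<in> B" "\<forall>i. (f i, f (Suc i)) \<in> Ra" "f 0 = x0"
    "\<And>a b a'. (a,b) \<in> B \<Longrightarrow> (a,a') \<in> Ra \<Longrightarrow> \<exists>b'. (b,b') \<in> Rb \<and> (a',b') \<in> B"
  shows "\<exists>g. g 0 = y0 \<and> (\<forall>i. (g i, g (Suc i)) \<in> Rb) \<and> (\<forall>i. (f i, g i) \<in> B)"
proof -
  define g where "g = rec_nat y0 (\<lambda>i b. SOME b'. (b,b') \<in> Rb \<and> (f (Suc i), b') \<in> B)"
  have g0: "g 0 = y0" by (simp add: g_def)
  have gS: "g (Suc i) = (SOME b'. (g i,b') \<in> Rb \<and> (f (Suc i), b') \<in> B)" for i
    by (simp add: g_def)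
  have B: "(f i, g i) \<in> B" for i
  proof (induction i)
    case 0 then show ?case using assms g0 by simp
  next
    case (Suc i)
    have "\<exists>b'. (g i,b') \<in> Rb \<and> (f (Suc i), b') \<in> B" using assms(4)[OF Suc] assms(2) by blast
    then show ?case unfolding gS by (metis (mono_tags, lifting) someI_ex)
  qed
  have "(g i, g (Suc i)) \<in> Rb" for i
  proof -
    have "\<exists>b'. (g i,b') \<in> Rb \<and> (f (Suc i), b') \<in> B" using assms(4)[OF B] assms(2) by blast
    then show ?thesis unfolding gS by (metis (mono_tags, lifting) someI_ex)
  qed
  then show ?thesis using g0 B by blast
qed

lemma pres:
  assumes cb: "cycle_bisim K1 K2 B"
  shows "\<forall>w1 w2. (w1,w2) \<in> B \<longrightarrow> (sat_s K1 w1 \<phi> \<longleftrightarrow> sat_s K2 w2 \<phi>)"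
    and "\<forall>\<pi>1 \<pi>2 i. (\<forall>j. (\<pi>1 j, \<pi>2 j) \<in> B) \<longrightarrow> (sat_p K1 \<pi>1 i \<psi> \<longleftrightarrow> sat_p K2 \<pi>2 i \<psi>)"
proof (induct \<phi> and \<psi>)
  case (Atom x)
  then show ?case using cb by (auto simp: cycle_bisim_def)
next
  case (SNot x)
  then show ?case by simp
next
  case (SAnd x1 x2)
  then show ?case by simp
next
  case (SOr x1 x2)
  then show ?case by simp
next
  case (Ex x)
  show ?case
  proof (intro allI impI)
    fix w1 w2 assume wB: "(w1, w2) \<in> B"
    have f: "\<And>a b a'. (a,b) \<in> B \<Longrightarrow> (a,a') \<in> R K1 \<Longrightarrow> \<exists>b'. (b,b') \<in> R K2 \<and> (a',b') \<in> B"
      using cb unfolding cycle_bisim_def by fast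
    have bk: "\<And>a b a'. (a,b) \<in> B\<inverse> \<Longrightarrow> (a,a') \<in> R K2 \<Longrightarrow> \<exists>b'. (b,b') \<in> R K1 \<and> (a',b') \<in> B\<inverse>"
      using cb unfolding cycle_bisim_def by fast
    show "sat_s K1 w1 (Defs.Ex x) = sat_s K2 w2 (Defs.Ex x)"
    proof
      assume "sat_s K1 w1 (Defs.Ex x)"
      then obtain \<pi> where p: "\<pi> \<in> Pth K1 w1" "sat_p K1 \<pi> 0 x" by auto
      have "\<exists>g. g 0 = w2 \<and> (\<forall>i. (g i, g (Suc i)) \<in> R K2) \<and> (\<forall>i. (\<pi> i, g i) \<in> B)"
        apply (rule lift[where Ra="R K1"])
        apply (rule wB) using p(1) apply (simp add: Pth_def) using p(1) apply (simp add: Pth_def)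
        using f by blast
      then obtain g where g: "g 0 = w2" "\<forall>i. (g i, g (Suc i)) \<in> R K2" "\<forall>i. (\<pi> i, g i) \<in> B" by blast
      have "g \<in> Pth K2 w2" using g by (simp add: Pth_def)
      moreover have "sat_p K2 g 0 x" using Ex g p by blast
      ultimately show "sat_s K2 w2 (Defs.Ex x)" by auto
    next
      assume "sat_s K2 w2 (Defs.Ex x)"
      then obtain \<pi> where p: "\<pi> \<in> Pth K2 w2" "sat_p K2 \<pi> 0 x" by auto
      have "\<exists>g. g 0 = w1 \<and> (\<forall>i. (g i, g (Suc i)) \<in> R K1) \<and> (\<forall>i. (\<pi> i, g i) \<in> B\<inverse>)"
        apply (rule lift[where Ra="R K2"])
        using wB apply simp using p(1) apply (simp add: Pth_def) using p(1) apply (simp add: Pth_def)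
        using bk by blast
      then obtain g where g: "g 0 = w1" "\<forall>i. (g i, g (Suc i)) \<in> R K1" "\<forall>i. (\<pi> i, g i) \<in> B\<inverse>" by blast
      have "g \<in> Pth K1 w1" using g by (simp add: Pth_def)
      moreover have "sat_p K1 g 0 x" using Ex g p by blast
      ultimately show "sat_s K1 w1 (Defs.Ex x)" by auto
    qed
  qed
next
  case (All x)
  show ?case
  proof (intro allI impI)
    fix w1 w2 assume wB: "(w1, w2) \<in> B"
    have f: "\<And>a b a'. (a,b) \<in> B \<Longrightarrow> (a,a') \<in> R K1 \<Longrightarrow> \<exists>b'. (b,b') \<in> R K2 \<and> (a',b') \<in> B"
      using cb unfolding cycle_bisim_def by fast
    have bk: "\<And>a b a'. (a,b) \<in> B\<inverse> \<Longrightarrow> (a,a') \<in> R K2 \<Longrightarrow> \<exists>b'. (b,b') \<in> R K1 \<and> (a',b') \<in> B\<inverse>"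
      using cb unfolding cycle_bisim_def by fast
    show "sat_s K1 w1 (All x) = sat_s K2 w2 (All x)"
    proof
      assume a: "sat_s K1 w1 (All x)"
      show "sat_s K2 w2 (All x)"
      proof (simp, intro ballI)
        fix \<pi> assume p: "\<pi> \<in> Pth K2 w2"
        have "\<exists>g. g 0 = w1 \<and> (\<forall>i. (g i, g (Suc i)) \<in> R K1) \<and> (\<forall>i. (\<pi> i, g i) \<in> B\<inverse>)"
          apply (rule lift[where Ra="R K2"])
          using wB apply simp using p(1) apply (simp add: Pth_def) using p(1) apply (simp add: Pth_def)
          using bk by blast
        then obtain g where g: "g 0 = w1" "\<forall>i. (g i, g (Suc i)) \<in> R K1" "\<forall>i. (\<pi> i, g i) \<in> B\<inverse>" by blast
        have "g \<in> Pth K1 w1" using g by (simp add: Pth_def)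
        then have "sat_p K1 g 0 x" using a by auto
        then show "sat_p K2 \<pi> 0 x" using All g by blast
      qed
    next
      assume a: "sat_s K2 w2 (All x)"
      show "sat_s K1 w1 (All x)"
      proof (simp, intro ballI)
        fix \<pi> assume p: "\<pi> \<in> Pth K1 w1"
        have "\<exists>g. g 0 = w2 \<and> (\<forall>i. (g i, g (Suc i)) \<in> R K2) \<and> (\<forall>i. (\<pi> i, g i) \<in> B)"
          apply (rule lift[where Ra="R K1"])
          apply (rule wB) using p(1) apply (simp add: Pth_def) using p(1) apply (simp add: Pth_def)
          using f by blast
        then obtain g where g: "g 0 = w2" "\<forall>i. (g i, g (Suc i)) \<in> R K2" "\<forall>i. (\<pi> i, g i) \<in> B" by blast
        have "g \<in> Pth K2 w2" using g by (simp add: Pth_def)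
        then have "sat_p K2 g 0 x" using a by auto
        then show "sat_p K1 \<pi> 0 x" using All g by blast
      qed
    qed
  qed
next
  case (ExC x)
  show ?case
  proof (intro allI impI)
    fix w1 w2 assume wB: "(w1, w2) \<in> B"
    have d: "\<forall>\<pi>1 \<in> Cyc K1 w1. \<exists>\<pi>2 \<in> Cyc K2 w2. \<forall>i. (\<pi>1 i, \<pi>2 i) \<in> B"
     and e: "\<forall>\<pi>2 \<in> Cyc K2 w2. \<exists>\<pi>1 \<in> Cyc K1 w1. \<forall>i. (\<pi>1 i, \<pi>2 i) \<in> B"
      using cb wB unfolding cycle_bisim_def by fast+
    have IH: "\<And>\<pi>1 \<pi>2. \<forall>j. (\<pi>1 j, \<pi>2 j) \<in> B \<Longrightarrow> sat_p K1 \<pi>1 0 x = sat_p K2 \<pi>2 0 x"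
      using ExC by blast
    show "sat_s K1 w1 (ExC x) = sat_s K2 w2 (ExC x)"
    proof
      assume "sat_s K1 w1 (ExC x)"
      then obtain \<pi> where p: "\<pi> \<in> Cyc K1 w1" "sat_p K1 \<pi> 0 x" by auto
      obtain \<pi>' where "\<pi>' \<in> Cyc K2 w2" "\<forall>i. (\<pi> i, \<pi>' i) \<in> B" using d p(1) by blast
      then show "sat_s K2 w2 (ExC x)" using IH p(2) by auto
    next
      assume "sat_s K2 w2 (ExC x)"
      then obtain \<pi> where p: "\<pi> \<in> Cyc K2 w2" "sat_p K2 \<pi> 0 x" by auto
      obtain \<pi>' where "\<pi>' \<in> Cyc K1 w1" "\<forall>i. (\<pi>' i, \<pi> i) \<in> B" using e p(1) by blast
      then show "sat_s K1 w1 (ExC x)" using IH p(2) by auto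
    qed
  qed
next
  case (AllC x)
  show ?case
  proof (intro allI impI)
    fix w1 w2 assume wB: "(w1, w2) \<in> B"
    have d: "\<forall>\<pi>1 \<in> Cyc K1 w1. \<exists>\<pi>2 \<in> Cyc K2 w2. \<forall>i. (\<pi>1 i, \<pi>2 i) \<in> B"
     and e: "\<forall>\<pi>2 \<in> Cyc K2 w2. \<exists>\<pi>1 \<in> Cyc K1 w1. \<forall>i. (\<pi>1 i, \<pi>2 i) \<in> B"
      using cb wB unfolding cycle_bisim_def by fast+
    have IH: "\<And>\<pi>1 \<pi>2. \<forall>j. (\<pi>1 j, \<pi>2 j) \<in> B \<Longrightarrow> sat_p K1 \<pi>1 0 x = sat_p K2 \<pi>2 0 x"
      using AllC by blast
    show "sat_s K1 w1 (AllC x) = sat_s K2 w2 (AllC x)"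
    proof
      assume a: "sat_s K1 w1 (AllC x)"
      show "sat_s K2 w2 (AllC x)"
      proof (simp, intro ballI)
        fix \<pi> assume p: "\<pi> \<in> Cyc K2 w2"
        obtain \<pi>' where "\<pi>' \<in> Cyc K1 w1" "\<forall>i. (\<pi>' i, \<pi> i) \<in> B" using e p by blast
        then show "sat_p K2 \<pi> 0 x" using IH a by auto
      qed
    next
      assume a: "sat_s K2 w2 (AllC x)"
      show "sat_s K1 w1 (AllC x)"
      proof (simp, intro ballI)
        fix \<pi> assume p: "\<pi> \<in> Cyc K1 w1"
        obtain \<pi>' where "\<pi>' \<in> Cyc K2 w2" "\<forall>i. (\<pi> i, \<pi>' i) \<in> B" using d p by blast
        then show "sat_p K1 \<pi> 0 x" using IH a by auto
      qed
    qed
  qed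
next
  case (State x)
  then show ?case by simp
next
  case (PNot x)
  then show ?case by simp
next
  case (PAnd x1 x2)
  then show ?case by simp
next
  case (POr x1 x2)
  then show ?case by simp
next
  case (Next x)
  then show ?case by simp
next
  case (Until x1 x2)
  show ?case
  proof (intro allI impI)
    fix \<pi>1 \<pi>2 and i :: nat assume h: "\<forall>j::nat. (\<pi>1 j, \<pi>2 j) \<in> B"
    have e1: "\<And>n. sat_p K1 \<pi>1 n x1 = sat_p K2 \<pi>2 n x1" using Until(1) h by blast
    have e2: "\<And>n. sat_p K1 \<pi>1 n x2 = sat_p K2 \<pi>2 n x2" using Until(2) h by blast
    show "sat_p K1 \<pi>1 i (Until x1 x2) = sat_p K2 \<pi>2 i (Until x1 x2)" by (simp only: sat_p.simps e1 e2)
  qed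
qed

lemma cyc_lift:
  assumes ws: "ws \<in> Wbul K" and p2: "\<pi>2 \<in> Cyc K (pr K ws)"
  shows "\<exists>\<pi>1 \<in> Cyc (unwinding K) ws. \<forall>i. \<pi>1 i \<in> Wbul K \<and> \<pi>2 i = pr K (\<pi>1 i)"
proof -
  define w where "w = pr K ws"
  have path: "(\<pi>2 i, \<pi>2 (Suc i)) \<in> R K" for i using p2 by (simp add: Cyc_def Pth_def)
  have p20: "\<pi>2 0 = w" using p2 by (simp add: Cyc_def Pth_def w_def)
  have ret: "\<exists>j>i. \<pi>2 j = w" for i using p2 p20 by (simp add: Cyc_def is_cycle_def)
  define f where "f = rec_nat ws (\<lambda>i x. if x = ws then ws @ [(\<pi>2 (Suc i), New)]
     else if \<pi>2 (Suc i) = w then ws else x @ [(\<pi>2 (Suc i), Cycle)])"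
  have f0: "f 0 = ws" by (simp add: f_def)
  have fS: "f (Suc i) = (if f i = ws then ws @ [(\<pi>2 (Suc i), New)]
     else if \<pi>2 (Suc i) = w then ws else f i @ [(\<pi>2 (Suc i), Cycle)])" for i
    by (simp add: f_def)
  have inv: "(f i = ws \<or> (\<exists>v1 vs. f i = ws @ [(v1,New)] @ map (\<lambda>v. (v,Cycle)) vs))
      \<and> pr K (f i) = \<pi>2 i" for i
  proof (induction i)
    case 0 then show ?case using f0 p20 w_def by simp
  next
    case (Suc i)
    then show ?case
    proof (cases "f i = ws")
      case True then show ?thesis using fS[of i] by force
    next
      case False
      then obtain v1 vs where e: "f i = ws @ [(v1,New)] @ map (\<lambda>v. (v,Cycle)) vs" using Suc by blast
      show ?thesis
      proof (cases "\<pi>2 (Suc i) = w")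
        case True then show ?thesis using fS[of i] False w_def by simp
      next
        case F2: False
        have "f (Suc i) = ws @ [(v1,New)] @ map (\<lambda>v. (v,Cycle)) (vs @ [\<pi>2 (Suc i)])"
          using fS[of i] False F2 e by simp
        moreover have "pr K (f (Suc i)) = \<pi>2 (Suc i)" using fS[of i] False F2 by simp
        ultimately show ?thesis by blast
      qed
    qed
  qed
  have edge: "(f i, f (Suc i)) \<in> Rbul K" for i
  proof (cases "f i = ws")
    case True
    then show ?thesis using fS[of i] inv[of i] path[of i] unfolding Rbul_def by auto
  next
    case False
    then obtain v1 vs where e: "f i = ws @ [(v1,New)] @ map (\<lambda>v. (v,Cycle)) vs" using inv[of i] by blast
    have ics: "init_cycle_state (f i) ws" using e by (auto simp: init_cycle_state_def)
    have pe: "(pr K (f i), \<pi>2 (Suc i)) \<in> R K" using inv[of i] path[of i] by simp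
    show ?thesis
    proof (cases "\<pi>2 (Suc i) = w")
      case True
      then show ?thesis using fS[of i] False ics pe w_def unfolding Rbul_def by auto
    next
      case F2: False
      then show ?thesis using fS[of i] False ics pe w_def unfolding Rbul_def by auto
    qed
  qed
  have inW: "f i \<in> Wbul K" for i
  proof (induction i)
    case 0 then show ?case using f0 ws by simp
  next
    case (Suc i) then show ?case using Wbul_step edge by blast
  qed
  have bk2: "\<And>k. f k \<noteq> ws \<longrightarrow> \<pi>2 (Suc k + d) = w \<longrightarrow> (\<exists>j>k. f j = ws)" for d
  proof (induction d)
    case 0 then show ?case using fS[of k] by (metis add_0_right lessI)
  next
    case (Suc d)
    show ?case
    proof (intro impI)
      assume a: "f k \<noteq> ws" "\<pi>2 (Suc k + Suc d) = w"
      show "\<exists>j>k. f j = ws"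
      proof (cases "\<pi>2 (Suc k) = w")
        case True then show ?thesis using fS[of k] a by (metis lessI)
      next
        case False
        then have "f (Suc k) \<noteq> ws" using fS[of k] a inv[of k] by auto
        moreover have "\<pi>2 (Suc (Suc k) + d) = w" using a by simp
        ultimately obtain j where "j > Suc k" "f j = ws" using Suc by blast
        then show ?thesis by (metis Suc_lessD)
      qed
    qed
  qed
  have cyc: "\<exists>j>i. f j = f 0" for i
  proof (cases "f i = ws")
    case False
    obtain m where m: "m > i" "\<pi>2 m = w" using ret by blast
    then have "\<pi>2 (Suc i + (m - Suc i)) = w" by simp
    then show ?thesis using bk2 False f0 by blast
  next
    case True
    then have ne: "f (Suc i) \<noteq> ws" using fS[of i] by simp
    obtain m where m: "m > Suc i" "\<pi>2 m = w" using ret by blast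
    have eqm: "Suc (Suc i) + (m - Suc (Suc i)) = m" using m(1) by arith
    have "\<pi>2 (Suc (Suc i) + (m - Suc (Suc i))) = w" unfolding eqm by (rule m(2))
    then obtain j where "j > Suc i" "f j = ws" using bk2 ne by blast
    then show ?thesis using f0 by (metis Suc_lessD)
  qed
  have Ru: "(f i, f (Suc i)) \<in> R (unwinding K)" for i
    using edge inW by (simp add: unwinding_def)
  have "f \<in> Cyc (unwinding K) ws"
    using Ru cyc f0 by (simp add: Cyc_def Pth_def is_cycle_def)
  moreover have "\<forall>i. f i \<in> Wbul K \<and> \<pi>2 i = pr K (f i)" using inW inv by simp
  ultimately show ?thesis by blast
qed

theorem mainTheorem3:
  fixes K :: "('ap, 'w) kripke"
  assumes "is_kripke K"
  shows "cycle_bisim (unwinding K) K {(ws, pr K ws) | ws. ws \<in> W (unwinding K)}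
         \<and> (\<forall>\<phi> :: 'ap sform. models K \<phi> \<longleftrightarrow> models (unwinding K) \<phi>)"
proof -
  let ?B = "{(ws, pr K ws) | ws. ws \<in> W (unwinding K)}"
  have WU: "W (unwinding K) = Wbul K" by (simp add: unwinding_def)
  have RU: "R (unwinding K) = Rbul K \<inter> (Wbul K \<times> Wbul K)" by (simp add: unwinding_def)
  have cb: "cycle_bisim (unwinding K) K ?B"
    unfolding cycle_bisim_def
  proof (intro conjI ballI)
    show "?B \<subseteq> W (unwinding K) \<times> W K" using pr_in_W[OF assms] WU by auto
    show "(init (unwinding K), init K) \<in> ?B" using Wbul_nil WU
      by (auto simp: unwinding_def pr_def)
  next
    fix x assume "x \<in> ?B"
    then obtain ws where x: "x = (ws, pr K ws)" and ws: "ws \<in> Wbul K" using WU by auto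
    have a: "L (unwinding K) ws = L K (pr K ws)" by (simp add: unwinding_def)
    have b: "\<forall>v1. (ws, v1) \<in> R (unwinding K) \<longrightarrow> (\<exists>v2. (pr K ws, v2) \<in> R K \<and> (v1, v2) \<in> ?B)"
      using Rbul_pr RU WU by blast
    have c: "\<forall>v2. (pr K ws, v2) \<in> R K \<longrightarrow> (\<exists>v1. (ws, v1) \<in> R (unwinding K) \<and> (v1, v2) \<in> ?B)"
    proof (intro allI impI)
      fix v2 assume v2: "(pr K ws, v2) \<in> R K"
      have r: "(ws, ws @ [(v2, New)]) \<in> Rbul K" using v2 unfolding Rbul_def by auto
      have "ws @ [(v2, New)] \<in> Wbul K" using Wbul_step[OF ws r] .
      then show "\<exists>v1. (ws, v1) \<in> R (unwinding K) \<and> (v1, v2) \<in> ?B"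
        using r ws RU WU by (intro exI[of _ "ws @ [(v2, New)]"]) auto
    qed
    have d: "\<forall>\<pi>1 \<in> Cyc (unwinding K) ws. \<exists>\<pi>2 \<in> Cyc K (pr K ws). \<forall>i. (\<pi>1 i, \<pi>2 i) \<in> ?B"
    proof
      fix \<pi>1 assume p: "\<pi>1 \<in> Cyc (unwinding K) ws"
      have st: "(\<pi>1 i, \<pi>1 (Suc i)) \<in> Rbul K \<inter> (Wbul K \<times> Wbul K)" for i
        using p RU by (simp add: Cyc_def Pth_def)
      have p0: "\<pi>1 0 = ws" using p by (simp add: Cyc_def Pth_def)
      have inW: "\<pi>1 i \<in> Wbul K" for i
        using st[of "i - 1"] p0 ws by (cases i) auto
      have cy: "\<forall>i. \<exists>j>i. \<pi>1 j = \<pi>1 0" using p by (simp add: Cyc_def is_cycle_def)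
      have c1: "(\<lambda>i. pr K (\<pi>1 i)) \<in> Cyc K (pr K ws)"
      proof -
        have "(pr K (\<pi>1 i), pr K (\<pi>1 (Suc i))) \<in> R K" for i using st[of i] Rbul_pr by blast
        moreover have "\<exists>j>i. pr K (\<pi>1 j) = pr K (\<pi>1 0)" for i using cy by metis
        ultimately show ?thesis unfolding Cyc_def Pth_def is_cycle_def using p0 by simp
      qed
      have m1: "\<forall>i. (\<pi>1 i, (\<lambda>i. pr K (\<pi>1 i)) i) \<in> ?B" using inW WU by auto
      show "\<exists>\<pi>2 \<in> Cyc K (pr K ws). \<forall>i. (\<pi>1 i, \<pi>2 i) \<in> ?B" apply (rule bexI[where x="\<lambda>i. pr K (\<pi>1 i)"]) apply (rule m1) by (rule c1)
    qed
    have e: "\<forall>\<pi>2 \<in> Cyc K (pr K ws). \<exists>\<pi>1 \<in> Cyc (unwinding K) ws. \<forall>i. (\<pi>1 i, \<pi>2 i) \<in> ?B"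
    proof
      fix \<pi>2 assume "\<pi>2 \<in> Cyc K (pr K ws)"
      from cyc_lift[OF ws this] obtain \<pi>1 where
        "\<pi>1 \<in> Cyc (unwinding K) ws" "\<forall>i. \<pi>1 i \<in> Wbul K \<and> \<pi>2 i = pr K (\<pi>1 i)" by blast
      then show "\<exists>\<pi>1 \<in> Cyc (unwinding K) ws. \<forall>i. (\<pi>1 i, \<pi>2 i) \<in> ?B" using WU by auto
    qed
    show "case x of (w1, w2) \<Rightarrow>
        L (unwinding K) w1 = L K w2 \<and>
        (\<forall>v1. (w1, v1) \<in> R (unwinding K) \<longrightarrow> (\<exists>v2. (w2, v2) \<in> R K \<and> (v1, v2) \<in> ?B)) \<and>
        (\<forall>v2. (w2, v2) \<in> R K \<longrightarrow> (\<exists>v1. (w1, v1) \<in> R (unwinding K) \<and> (v1, v2) \<in> ?B)) \<and>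
        (\<forall>\<pi>1 \<in> Cyc (unwinding K) w1. \<exists>\<pi>2 \<in> Cyc K w2. \<forall>i. (\<pi>1 i, \<pi>2 i) \<in> ?B) \<and>
        (\<forall>\<pi>2 \<in> Cyc K w2. \<exists>\<pi>1 \<in> Cyc (unwinding K) w1. \<forall>i. (\<pi>1 i, \<pi>2 i) \<in> ?B)"
      unfolding x prod.case using a b c d e by blast
  qed
  have "models K \<phi> \<longleftrightarrow> models (unwinding K) \<phi>" for \<phi>
  proof -
    have "(init (unwinding K), init K) \<in> ?B" using cb by (simp add: cycle_bisim_def)
    then show ?thesis using pres(1)[OF cb] by (auto simp: models_def)
  qed
  then show ?thesis using cb by blast
qed

end
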